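(* If two signed graphs $SG_1$ and $SG_2$ are equivalent, then for every $i$, $H^i(SG_1)\cong H^i(SG_2)$ and $H^i_b(SG_1)\cong H^i_b(SG_2)$ as graded abelian groups.
   Context: Signed graphs: $SG=(G,\sigma)$, $G$ finite (loops, multiple edges allowed), $\sigma:E(G)\to\{\pm1\}$. Vertex switching at $v$ negates the sign of every non-loop edge incident to $v$ (loops keep their sign). Two signed graphs are equivalent if they are related by finitely many vertex switchings (on the same underlying graph). Negative circuit: product of edge signs $-1$; balanced = no negative circuit. $[G:s]$, $[SG:s]$: spanning subgraph with edge set $s$. Complexes: Fix a total order on $E(G)$. An enhanced state of $G$ is $S=(s,c)$, $c$ labels each component of $[G:s]$ by $1$ or $x$; $j(S)$ = number of $x$-labels (grading). With $m(1,1)=1$, $m(1,x)=m(x,1)=x$, $m(x,x)=0$: for $e\notin s$, $S_e=(s\cup\{e\},c_e)$ where a component containing both ends of $e$ keeps its label and if $e$ joins components $E_i,E_j$ the merged one gets $m(c(E_i),c(E_j))$ ($S_e=0$ if both are $x$). $d(S)=\sum_{e\notin s}(-1)^{n(e)}S_e$, $n(e)$ = number of edges of $s$ preceding $e$. $H^i(SG)$: cohomology of $C^\bullet(SG)$, free on enhanced states whose $c$ assigns $1$ to every unbalanced component of $[SG:s]$, differential $d_s=f\circ d$ with $f$ projecting onto these states. $H^i_b(SG)$: cohomology of $C^\bullet_b(SG)$, free on enhanced states with $[SG:s]$ balanced, differential $d_b=f_b\circ d$, $f_b$ the analogous projection. *)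

theory Defs
  imports "HOL-Algebra.Algebra"
begin

(* A finite graph (loops and multiple edges allowed): vertex set V, edge set E,
   ends e = set of end vertices of e (one vertex for a loop, two otherwise). The total order on E(G) is the order of the type 'e. *)

definition signed_graph :: "'v set \<Rightarrow> 'e set \<Rightarrow> ('e \<Rightarrow> 'v set) \<Rightarrow> ('e \<Rightarrow> int) \<Rightarrow> bool" where
  "signed_graph V E ends \<sigma> \<longleftrightarrow> finite V \<and> finite E \<and>
     (\<forall>e\<in>E. ends e \<subseteq> V \<and> ends e \<noteq> {} \<and> card (ends e) \<le> 2 \<and> (\<sigma> e = 1 \<or> \<sigma> e = -1))"

definition switch :: "'e set \<Rightarrow> ('e \<Rightarrow> 'v set) \<Rightarrow> 'v \<Rightarrow> ('e \<Rightarrow> int) \<Rightarrow> ('e \<Rightarrow> int)" where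
  "switch E ends v \<sigma> = (\<lambda>e. if e \<in> E \<and> v \<in> ends e \<and> card (ends e) = 2 then - \<sigma> e else \<sigma> e)"

definition sg_equiv :: "'v set \<Rightarrow> 'e set \<Rightarrow> ('e \<Rightarrow> 'v set) \<Rightarrow> ('e \<Rightarrow> int) \<Rightarrow> ('e \<Rightarrow> int) \<Rightarrow> bool" where
  "sg_equiv V E ends \<sigma>1 \<sigma>2 \<longleftrightarrow> (\<lambda>\<tau> \<tau>'. \<exists>v\<in>V. \<tau>' = switch E ends v \<tau>)\<^sup>*\<^sup>* \<sigma>1 \<sigma>2"

definition conn_rel :: "'v set \<Rightarrow> ('e \<Rightarrow> 'v set) \<Rightarrow> 'e set \<Rightarrow> ('v \<times> 'v) set" where
  "conn_rel V ends s = {(u, w). u \<in> V \<and> w \<in> V \<and>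
      (\<lambda>a b. \<exists>e\<in>s. ends e = {a, b})\<^sup>*\<^sup>* u w}"

definition comps :: "'v set \<Rightarrow> ('e \<Rightarrow> 'v set) \<Rightarrow> 'e set \<Rightarrow> 'v set set" where
  "comps V ends s = V // conn_rel V ends s"

definition comp_of :: "'v set \<Rightarrow> ('e \<Rightarrow> 'v set) \<Rightarrow> 'e set \<Rightarrow> 'v \<Rightarrow> 'v set" where
  "comp_of V ends s u = conn_rel V ends s `` {u}"

(* a circuit in [G:s]: distinct edges es and distinct vertices vs, es!i joining vs!i and vs!(i+1 mod k);
   k = 1 is a loop, k = 2 a pair of parallel edges *)
definition is_circuit :: "('e \<Rightarrow> 'v set) \<Rightarrow> 'e set \<Rightarrow> 'e list \<Rightarrow> 'v list \<Rightarrow> bool" where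
  "is_circuit ends s es vs \<longleftrightarrow> es \<noteq> [] \<and> length es = length vs \<and> distinct es \<and> distinct vs \<and>
     set es \<subseteq> s \<and> (\<forall>i<length es. ends (es ! i) = {vs ! i, vs ! ((i + 1) mod length vs)})"

definition negative_circuit :: "('e \<Rightarrow> 'v set) \<Rightarrow> ('e \<Rightarrow> int) \<Rightarrow> 'e set \<Rightarrow> 'e list \<Rightarrow> 'v list \<Rightarrow> bool" where
  "negative_circuit ends \<sigma> s es vs \<longleftrightarrow> is_circuit ends s es vs \<and> prod_list (map \<sigma> es) = -1"

definition balanced_comp :: "('e \<Rightarrow> 'v set) \<Rightarrow> ('e \<Rightarrow> int) \<Rightarrow> 'e set \<Rightarrow> 'v set \<Rightarrow> bool" where
  "balanced_comp ends \<sigma> s K \<longleftrightarrow> \<not> (\<exists>es vs. negative_circuit ends \<sigma> s es vs \<and> set vs \<subseteq> K)"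

definition balanced_sub :: "('e \<Rightarrow> 'v set) \<Rightarrow> ('e \<Rightarrow> int) \<Rightarrow> 'e set \<Rightarrow> bool" where
  "balanced_sub ends \<sigma> s \<longleftrightarrow> \<not> (\<exists>es vs. negative_circuit ends \<sigma> s es vs)"

(* An enhanced state (s, c): s a set of edges, c the set of components of [G:s] labelled x
   (all other components are labelled 1). *)
type_synonym ('e, 'v) estate = "'e set \<times> 'v set set"

definition enh_states :: "'v set \<Rightarrow> 'e set \<Rightarrow> ('e \<Rightarrow> 'v set) \<Rightarrow> ('e, 'v) estate set" where
  "enh_states V E ends = {(s, c). s \<subseteq> E \<and> c \<subseteq> comps V ends s}"

(* S_e for e not in s (None encodes S_e = 0, which happens when two x-components merge) *)
definition state_step :: "'v set \<Rightarrow> ('e \<Rightarrow> 'v set) \<Rightarrow> 'e \<Rightarrow> ('e, 'v) estate \<Rightarrow> ('e, 'v) estate option" where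
  "state_step V ends e S = (let s = fst S; c = snd S;
      K1 = comp_of V ends s (SOME u. u \<in> ends e);
      K2 = comp_of V ends s (SOME w. w \<in> ends e \<and> (card (ends e) = 2 \<longrightarrow> w \<noteq> (SOME u. u \<in> ends e)))
    in if K1 = K2 then Some (insert e s, c)
       else if K1 \<in> c \<and> K2 \<in> c then None
       else Some (insert e s, {K \<in> c. K \<noteq> K1 \<and> K \<noteq> K2} \<union>
                               (if K1 \<in> c \<or> K2 \<in> c then {K1 \<union> K2} else {})))"

definition n_prec :: "'e::linorder set \<Rightarrow> 'e \<Rightarrow> nat" where
  "n_prec s e = card {e' \<in> s. e' < e}"

(* coefficient of T in d(S) = sum over e not in s of (-1)^n(e) S_e *)
definition dcoef :: "'v set \<Rightarrow> 'e::linorder set \<Rightarrow> ('e \<Rightarrow> 'v set) \<Rightarrow> ('e, 'v) estate \<Rightarrow> ('e, 'v) estate \<Rightarrow> int" where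
  "dcoef V E ends S T = (\<Sum>e \<in> E - fst S. if state_step V ends e S = Some T then (-1) ^ n_prec (fst S) e else 0)"

(* cochain group of bidegree (i,j): free abelian group on the states in A with |s| = i, j(S) = j;
   elements are integer-valued functions supported there, with pointwise addition *)
definition cochains :: "('e, 'v) estate set \<Rightarrow> int \<Rightarrow> nat \<Rightarrow> (('e, 'v) estate \<Rightarrow> int) monoid" where
  "cochains A i j = \<lparr> carrier = {\<phi>. \<forall>S. \<phi> S \<noteq> 0 \<longrightarrow> S \<in> A \<and> int (card (fst S)) = i \<and> card (snd S) = j},
                      monoid.mult = (\<lambda>\<phi> \<psi> S. \<phi> S + \<psi> S), monoid.one = (\<lambda>_. 0) \<rparr>"

(* differential f o d, with f the projection onto the states in A *)
definition dmap :: "'v set \<Rightarrow> 'e::linorder set \<Rightarrow> ('e \<Rightarrow> 'v set) \<Rightarrow> ('e, 'v) estate set \<Rightarrow>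
                    (('e, 'v) estate \<Rightarrow> int) \<Rightarrow> (('e, 'v) estate \<Rightarrow> int)" where
  "dmap V E ends A \<phi> = (\<lambda>T. if T \<in> A then (\<Sum>S\<in>A. \<phi> S * dcoef V E ends S T) else 0)"

definition cohom :: "'v set \<Rightarrow> 'e::linorder set \<Rightarrow> ('e \<Rightarrow> 'v set) \<Rightarrow> ('e, 'v) estate set \<Rightarrow> int \<Rightarrow> nat \<Rightarrow>
                     (('e, 'v) estate \<Rightarrow> int) set monoid" where
  "cohom V E ends A i j =
     ((cochains A i j)\<lparr>carrier := {\<phi> \<in> carrier (cochains A i j). dmap V E ends A \<phi> = (\<lambda>_. 0)}\<rparr>)
       Mod (dmap V E ends A ` carrier (cochains A (i - 1) j))"

(* basis of C(SG): states whose c assigns 1 to every unbalanced component *)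
definition states_s :: "'v set \<Rightarrow> 'e set \<Rightarrow> ('e \<Rightarrow> 'v set) \<Rightarrow> ('e \<Rightarrow> int) \<Rightarrow> ('e, 'v) estate set" where
  "states_s V E ends \<sigma> = {S \<in> enh_states V E ends. \<forall>K \<in> snd S. balanced_comp ends \<sigma> (fst S) K}"

(* basis of C_b(SG): states with [SG:s] balanced *)
definition states_b :: "'v set \<Rightarrow> 'e set \<Rightarrow> ('e \<Rightarrow> 'v set) \<Rightarrow> ('e \<Rightarrow> int) \<Rightarrow> ('e, 'v) estate set" where
  "states_b V E ends \<sigma> = {S \<in> enh_states V E ends. balanced_sub ends \<sigma> (fst S)}"

definition H_s where "H_s V E ends \<sigma> i j = cohom V E ends (states_s V E ends \<sigma>) i j"
definition H_b where "H_b V E ends \<sigma> i j = cohom V E ends (states_b V E ends \<sigma>) i j"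

end

theory Submission
  imports Defs
begin

lemma my_prod_list_nth:
  fixes g :: "'a \<Rightarrow> 'b::comm_monoid_mult"
  shows "prod_list (map g xs) = (\<Prod>i<length xs. g (xs ! i))"
proof (induction xs)
  case (Cons a xs)
  have "(\<Prod>i<length (a#xs). g ((a#xs) ! i)) = g a * (\<Prod>i<length xs. g (xs ! i))"
    by (simp only: length_Cons prod.lessThan_Suc_shift nth_Cons_0 nth_Cons_Suc)
  then show ?case using Cons by simp
qed simp

lemma mod_succ_helper: "z < (k::nat) \<Longrightarrow> (z+1) mod k = (if z+1 = k then 0 else z+1)"
proof (cases "z+1 = k")
  case True then show ?thesis by (simp only: mod_self simp_thms if_True)
next
  case False
  assume "z < k"
  with False have "z+1 < k" by linarith
  then show ?thesis using False by (simp only: if_False mod_less)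
qed
lemma succ_mod_bij: "bij_betw (\<lambda>i. (i+1) mod (k::nat)) {..<k} {..<k}"
proof -
  have "inj_on (\<lambda>i. (i+1) mod k) {..<k}"
  proof (rule inj_onI)
    fix x y assume xk: "x \<in> {..<k}" and yk: "y \<in> {..<k}" and eq: "(x+1) mod k = (y+1) mod k"
    have xk': "x < k" using xk by (simp only: lessThan_iff)
    have yk': "y < k" using yk by (simp only: lessThan_iff)
    have e: "(if x+1=k then 0 else x+1) = (if y+1=k then (0::nat) else y+1)"
      using mod_succ_helper[OF xk'] mod_succ_helper[OF yk'] eq by argo
    show "x = y" using e xk' yk' by presburger
  qed
  moreover have "(\<lambda>i. (i+1) mod k) ` {..<k} \<subseteq> {..<k}"
  proof
    fix z assume "z \<in> (\<lambda>i. (i+1) mod k) ` {..<k}"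
    then obtain i where "i < k" "z = (i+1) mod k" by auto
    then show "z \<in> {..<k}" by auto
  qed
  ultimately show ?thesis
    by (simp add: bij_betw_def endo_inj_surj)
qed

lemma switch_factor:
  fixes \<sigma> :: "'e \<Rightarrow> int"
  assumes "e \<in> E" "ends e = {a, b}"
  shows "switch E ends v \<sigma> e = \<sigma> e * (if a = v then -1 else 1) * (if b = v then -1 else 1)"
  using assms by (cases "a = b") (auto simp: switch_def card_insert_if)

lemma prod_circ:
  fixes \<sigma> :: "'e \<Rightarrow> int"
  assumes c: "is_circuit ends s es vs" and sE: "s \<subseteq> E"
  shows "prod_list (map (switch E ends v \<sigma>) es) = prod_list (map \<sigma> es)"
proof -
  define k where "k = length es"
  define f where "f = (\<lambda>x. if x = v then -1 else (1::int))"
  have lk: "length vs = k" using c by (simp add: is_circuit_def k_def)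
  have kpos: "k > 0" using c unfolding is_circuit_def k_def by (metis length_greater_0_conv)
  have step: "switch E ends v \<sigma> (es ! i) = \<sigma> (es ! i) * f (vs ! i) * f (vs ! ((i+1) mod k))"
    if "i < k" for i
  proof -
    have "es ! i \<in> E" using c that sE unfolding is_circuit_def k_def by (metis nth_mem subset_iff)
    moreover have "ends (es ! i) = {vs ! i, vs ! ((i + 1) mod k)}"
      using c that lk unfolding is_circuit_def k_def by auto
    ultimately show ?thesis using switch_factor[of "es!i" E ends] by (simp add: f_def)
  qed
  have pl: "\<And>g::'e\<Rightarrow>int. prod_list (map g es) = (\<Prod>i<k. g (es ! i))"
    by (simp add: k_def my_prod_list_nth)
  have bij: "bij_betw (\<lambda>i. (i+1) mod k) {..<k} {..<k}" by (rule succ_mod_bij)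
  have re: "(\<Prod>i<k. f (vs ! ((i+1) mod k))) = (\<Prod>i<k. f (vs ! i))"
    using prod.reindex_bij_betw[OF bij, of "\<lambda>i. f (vs ! i)"] by simp
  have sq: "(\<Prod>i<k. f (vs ! i)) * (\<Prod>i<k. f (vs ! i)) = 1"
  proof -
    have ff: "\<And>x. f x * f x = 1" by (simp add: f_def)
    have "(\<Prod>i<k. f (vs ! i)) * (\<Prod>i<k. f (vs ! i)) = (\<Prod>i<k. f (vs ! i) * f (vs ! i))"
      by (rule prod.distrib[symmetric])
    also have "\<dots> = (\<Prod>i<k. (1::int))" by (simp only: ff)
    also have "\<dots> = 1" by (rule prod.neutral_const)
    finally show ?thesis .
  qed
  have "prod_list (map (switch E ends v \<sigma>) es) = (\<Prod>i<k. \<sigma> (es ! i) * f (vs ! i) * f (vs ! ((i+1) mod k)))"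
    using pl step by simp
  also have "\<dots> = (\<Prod>i<k. \<sigma> (es ! i)) * ((\<Prod>i<k. f (vs ! i)) * (\<Prod>i<k. f (vs ! ((i+1) mod k))))"
    by (simp add: prod.distrib mult.assoc)
  also have "\<dots> = prod_list (map \<sigma> es)" using re sq pl by simp
  finally show ?thesis .
qed

lemma neg_switch:
  "s \<subseteq> E \<Longrightarrow> negative_circuit ends (switch E ends v \<sigma>) s es vs = negative_circuit ends \<sigma> s es vs"
  unfolding negative_circuit_def using prod_circ by metis

lemma states_switch:
  "states_s V E ends (switch E ends v \<sigma>) = states_s V E ends \<sigma>"
  "states_b V E ends (switch E ends v \<sigma>) = states_b V E ends \<sigma>"
proof -
  have "\<And>s. s \<subseteq> E \<Longrightarrow> balanced_comp ends (switch E ends v \<sigma>) s = balanced_comp ends \<sigma> s"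
    unfolding balanced_comp_def by (simp add: neg_switch)
  moreover have "\<And>s. s \<subseteq> E \<Longrightarrow> balanced_sub ends (switch E ends v \<sigma>) s = balanced_sub ends \<sigma> s"
    unfolding balanced_sub_def by (simp add: neg_switch)
  ultimately show "states_s V E ends (switch E ends v \<sigma>) = states_s V E ends \<sigma>"
    "states_b V E ends (switch E ends v \<sigma>) = states_b V E ends \<sigma>"
    unfolding states_s_def states_b_def enh_states_def by (auto simp del: Collect_case_prod)
qed

lemma states_equiv:
  assumes "sg_equiv V E ends \<sigma>1 \<sigma>2"
  shows "states_s V E ends \<sigma>1 = states_s V E ends \<sigma>2 \<and> states_b V E ends \<sigma>1 = states_b V E ends \<sigma>2"
  using assms unfolding sg_equiv_def
proof (induction rule: rtranclp_induct)
  case base then show ?case by simp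
next
  case (step y z) then show ?case using states_switch by metis
qed

theorem proposition5p3:
  fixes V :: "'v set" and E :: "'e::linorder set" and ends :: "'e \<Rightarrow> 'v set"
    and \<sigma>1 \<sigma>2 :: "'e \<Rightarrow> int"
  assumes "signed_graph V E ends \<sigma>1" and "signed_graph V E ends \<sigma>2"
    and "sg_equiv V E ends \<sigma>1 \<sigma>2"
  shows "\<forall>(i::int) (j::nat). H_s V E ends \<sigma>1 i j \<cong> H_s V E ends \<sigma>2 i j
                         \<and> H_b V E ends \<sigma>1 i j \<cong> H_b V E ends \<sigma>2 i j"
  using states_equiv[OF assms(3)] by (simp add: H_s_def H_b_def)

end
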